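(* Let $A$ be a meet-complemented lattice in which $\Box x$ and $\Diamond x$ exist for every $x\in A$, and let $a,b\in A$. Then (i) $\neg\neg a\le\Box\Diamond a$; (ii) $\Box a\le\Box\Diamond a$; (B1) $a\le\Box\Diamond a$; (B2) $\Diamond\Box a\le a$; (A) $\Diamond a\le b$ if and only if $a\le\Box b$; (iii) $\Diamond\Box\Diamond a=\Diamond a$ and $\Box\Diamond\Box a=\Box a$.
   Context: A meet-complemented lattice is a lattice $(L,\le)$ (not necessarily distributive) such that for every $a\in L$ the element $\neg a=\max\{b\in L: a\wedge b\le c\ \text{for all } c\in L\}$ exists; it is bounded with bottom $0$ and top $1$. For $a\in L$, $\Box a=\max\{b\in L: a\vee\neg b=1\}$ and $\Diamond a=\min\{b\in L: \neg a\vee b=1\}$. *)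

theory Defs
  imports Main
begin

definition is_max :: "('a::order \<Rightarrow> bool) \<Rightarrow> 'a \<Rightarrow> bool" where
  "is_max P x \<longleftrightarrow> P x \<and> (\<forall>y. P y \<longrightarrow> y \<le> x)"

definition is_min :: "('a::order \<Rightarrow> bool) \<Rightarrow> 'a \<Rightarrow> bool" where
  "is_min P x \<longleftrightarrow> P x \<and> (\<forall>y. P y \<longrightarrow> x \<le> y)"

definition meet_complemented :: "'a::bounded_lattice itself \<Rightarrow> bool" where
  "meet_complemented _ \<longleftrightarrow>
     (\<forall>a::'a. \<exists>n. is_max (\<lambda>b. \<forall>c. inf a b \<le> c) n)"

definition mneg :: "'a::bounded_lattice \<Rightarrow> 'a" where
  "mneg a = (GREATEST b. \<forall>c. inf a b \<le> c)"

definition mbox :: "'a::bounded_lattice \<Rightarrow> 'a" where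
  "mbox a = (GREATEST b. sup a (mneg b) = top)"

definition mdia :: "'a::bounded_lattice \<Rightarrow> 'a" where
  "mdia a = (LEAST b. sup (mneg a) b = top)"

end

theory Submission
  imports Defs
begin

lemma greatest_is_max: "is_max P x \<Longrightarrow> (GREATEST b. P b) = x"
  unfolding is_max_def by (intro Greatest_equality) auto

lemma least_is_min: "is_min P x \<Longrightarrow> (LEAST b. P b) = x"
  unfolding is_min_def by (intro Least_equality) auto

theorem lemma14:
  fixes a b :: "'a::bounded_lattice"
  assumes mc: "meet_complemented TYPE('a)"
    and box_ex: "\<forall>x::'a. \<exists>y. is_max (\<lambda>b. sup x (mneg b) = top) y"
    and dia_ex: "\<forall>x::'a. \<exists>y. is_min (\<lambda>b. sup (mneg x) b = top) y"
  shows "mneg (mneg a) \<le> mbox (mdia a)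
       \<and> mbox a \<le> mbox (mdia a)
       \<and> a \<le> mbox (mdia a)
       \<and> mdia (mbox a) \<le> a
       \<and> (mdia a \<le> b \<longleftrightarrow> a \<le> mbox b)
       \<and> mdia (mbox (mdia a)) = mdia a
       \<and> mbox (mdia (mbox a)) = mbox a"
proof -
  have N: "is_max (\<lambda>b. \<forall>c. inf x b \<le> c) (mneg x)" for x :: 'a
  proof -
    obtain n where "is_max (\<lambda>b. \<forall>c. inf x b \<le> c) n"
      using mc unfolding meet_complemented_def by blast
    then show ?thesis unfolding mneg_def using greatest_is_max by metis
  qed
  have N1: "inf x (mneg x) = bot" for x :: 'a
    using N[of x] unfolding is_max_def by (metis bot.extremum_uniqueI)
  have N2: "inf x y = bot \<Longrightarrow> y \<le> mneg x" for x y :: 'a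
    using N[of x] unfolding is_max_def by (metis bot.extremum)
  have anti: "x \<le> y \<Longrightarrow> mneg y \<le> mneg x" for x y :: 'a
  proof (rule N2)
    assume h: "x \<le> y"
    have "inf x (mneg y) \<le> inf y (mneg y)" using h by (simp add: le_infI1)
    then show "inf x (mneg y) = bot" using N1 by (metis bot.extremum_uniqueI)
  qed
  have dn: "x \<le> mneg (mneg x)" for x :: 'a
    by (rule N2) (simp add: N1 inf_commute)
  have B: "is_max (\<lambda>b. sup x (mneg b) = top) (mbox x)" for x :: 'a
  proof -
    obtain n where "is_max (\<lambda>b. sup x (mneg b) = top) n" using box_ex by blast
    then show ?thesis unfolding mbox_def using greatest_is_max by metis
  qed
  have D: "is_min (\<lambda>b. sup (mneg x) b = top) (mdia x)" for x :: 'a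
  proof -
    obtain n where "is_min (\<lambda>b. sup (mneg x) b = top) n" using dia_ex by blast
    then show ?thesis unfolding mdia_def using least_is_min by metis
  qed
  have boxc: "y \<le> mbox x \<longleftrightarrow> sup x (mneg y) = top" for x y :: 'a
  proof
    assume h: "y \<le> mbox x"
    have "sup x (mneg (mbox x)) = top" using B[of x] unfolding is_max_def by simp
    moreover have "sup x (mneg (mbox x)) \<le> sup x (mneg y)" using anti[OF h] sup_mono by blast
    ultimately show "sup x (mneg y) = top" by (metis top.extremum_uniqueI)
  next
    assume "sup x (mneg y) = top" then show "y \<le> mbox x" using B[of x] unfolding is_max_def by simp
  qed
  have diac: "mdia x \<le> y \<longleftrightarrow> sup (mneg x) y = top" for x y :: 'a
  proof
    assume h: "mdia x \<le> y"
    have "sup (mneg x) (mdia x) = top" using D[of x] unfolding is_min_def by simp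
    moreover have "sup (mneg x) (mdia x) \<le> sup (mneg x) y" using h sup_mono by blast
    ultimately show "sup (mneg x) y = top" by (metis top.extremum_uniqueI)
  next
    assume "sup (mneg x) y = top" then show "mdia x \<le> y" using D[of x] unfolding is_min_def by simp
  qed
  have A: "mdia x \<le> y \<longleftrightarrow> x \<le> mbox y" for x y :: 'a
    using boxc diac by (simp add: sup_commute)
  have B1: "x \<le> mbox (mdia x)" for x :: 'a using A by blast
  have B2: "mdia (mbox x) \<le> x" for x :: 'a using A by blast
  have i: "mneg (mneg x) \<le> mbox (mdia x)" for x :: 'a
  proof -
    have "sup (mdia x) (mneg x) = top" using diac[of x "mdia x"] by (simp add: sup_commute)
    moreover have "sup (mdia x) (mneg x) \<le> sup (mdia x) (mneg (mneg (mneg x)))"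
      using dn[of "mneg x"] sup_mono by blast
    ultimately show ?thesis using boxc by (metis top.extremum_uniqueI)
  qed
  have bn: "mbox x \<le> mneg (mneg x)" for x :: 'a
  proof -
    define y where "y = inf (mbox x) (mneg x)"
    have "sup x (mneg (mbox x)) = top" using boxc by blast
    moreover have "mneg (mbox x) \<le> mneg y" unfolding y_def by (rule anti) simp
    moreover have "x \<le> mneg y"
    proof (rule N2)
      have "inf x y \<le> inf x (mneg x)" unfolding y_def by (simp add: le_infI2)
      then have "inf x y = bot" using N1 by (metis bot.extremum_uniqueI)
      then show "inf y x = bot" by (simp add: inf_commute)
    qed
    ultimately have "mneg y = top" by (metis sup_least top.extremum_uniqueI)
    then have "y = bot" using N1[of y] by simp
    then show ?thesis unfolding y_def by (intro N2) (simp add: inf_commute)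
  qed
  have mono_box: "x \<le> y \<Longrightarrow> mbox x \<le> mbox y" for x y :: 'a
    using A B2 order_trans by blast
  have mono_dia: "x \<le> y \<Longrightarrow> mdia x \<le> mdia y" for x y :: 'a
    using A B1 order_trans by blast
  show ?thesis
  proof (intro conjI)
    show "mbox a \<le> mbox (mdia a)" using bn i order_trans by blast
    show "mdia (mbox (mdia a)) = mdia a"
      using B2 mono_dia[OF B1] antisym by blast
    show "mbox (mdia (mbox a)) = mbox a"
      using B1 mono_box[OF B2] antisym by blast
  qed (use i B1 B2 A in auto)
qed

end
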